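(* Let $X_1,\dots,X_k$ be normal terms, let $f\in\Sigma_E$ have arity $k$, and let $\Pi$ be a cut-free derivation in $\mathcal S$ of $\Gamma,\downarrow f(X_1,\dots,X_k)\vdash M$. Then there exists a cut-free derivation $\Pi'$ in $\mathcal S$ of $\Gamma,X_1,\dots,X_k\vdash M$.
   Context: Fix names, variables and constructors $\mathsf{pub}$ (unary), $\mathsf{sign},\mathsf{blind},\langle\cdot,\cdot\rangle,\{\cdot\}_\cdot$ (binary). $E$ is the union of AC-convergent equational theories $E_1,\dots,E_n$ with pairwise disjoint signatures, disjoint from the constructors, each with at most one associative-commutative (AC) binary symbol $\oplus_i$; $E$ is presented by a rewrite system $R_E$ terminating and confluent modulo AC; $\Sigma_E$ is its signature. Terms are ground terms over names, the constructors and $\Sigma_E$; $\downarrow N$ is the $R_E$-normal form of $N$ modulo AC, and normal terms are those in normal form. $\equiv$ is equality modulo AC of all $\oplus_i$; $\approx_E$ equality modulo $E$. Guarded term: a name, a variable, or headed by a constructor. $E$-context: term with holes built only from symbols of $\Sigma_E$. Sequents $\Gamma\vdash M$ have all terms in normal form; $\Gamma,M$ means $\Gamma\cup\{M\}$. A derivation is cut-free if it has no instance of (cut). System $\mathcal S$: (id) $\Gamma\vdash M$ with no premise if $M\approx_E C[M_1,\dots,M_k]$ for an $E$-context $C$ and $M_i\in\Gamma$; (cut) from $\Gamma\vdash M$, $\Gamma,M\vdash T$ infer $\Gamma\vdash T$; ($p_L$) from $\Gamma,\langle M,N\rangle,M,N\vdash T$ infer $\Gamma,\langle M,N\rangle\vdash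 T$; ($p_R$) from $\Gamma\vdash M,\Gamma\vdash N$ infer $\Gamma\vdash\langle M,N\rangle$; ($e_L$) from $\Gamma,\{M\}_K\vdash K$ and $\Gamma,\{M\}_K,M,K\vdash N$ infer $\Gamma,\{M\}_K\vdash N$; ($e_R$) from $\Gamma\vdash M,\Gamma\vdash K$ infer $\Gamma\vdash\{M\}_K$; ($\mathsf{sign}_L$) from $\Gamma,\mathsf{sign}(M,K),\mathsf{pub}(L),M\vdash N$ infer $\Gamma,\mathsf{sign}(M,K),\mathsf{pub}(L)\vdash N$ if $K\equiv L$; ($\mathsf{sign}_R$) from $\Gamma\vdash M,\Gamma\vdash K$ infer $\Gamma\vdash\mathsf{sign}(M,K)$; ($\mathsf{blind}_{L1}$) from $\Gamma,\mathsf{blind}(M,K)\vdash K$ and $\Gamma,\mathsf{blind}(M,K),M,K\vdash N$ infer $\Gamma,\mathsf{blind}(M,K)\vdash N$; ($\mathsf{blind}_R$) from $\Gamma\vdash M,\Gamma\vdash K$ infer $\Gamma\vdash\mathsf{blind}(M,K)$; ($\mathsf{blind}_{L2}$) from $\Gamma,\mathsf{sign}(\mathsf{blind}(M,R),K)\vdash R$ and $\Gamma,\mathsf{sign}(\mathsf{blind}(M,R),K),\mathsf{sign}(M,K),R\vdash N$ infer $\Gamma,\mathsf{sign}(\mathsf{blind}(M,R),K)\vdash N$; ($gs$) from $\Gamma\vdash A$, $\Gamma,A\vdash M$ infer $\Gamma\vdash M$ if $A$ is a guarded subterm of a term in $\Gamma\cup\{M\}$. *)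

theory Defs
  imports Main
begin

text \<open>Terms over names (type 'n), variables (used only in rewrite rules and E-contexts),
  the constructors pub, sign, blind, pairing and encryption, and the symbols of
  Sigma_E (type 'f; every element of 'f is a symbol of Sigma_E).\<close>

datatype ('n, 'f) trm =
    Nm 'n
  | V nat
  | Pub "('n, 'f) trm"
  | Sign "('n, 'f) trm" "('n, 'f) trm"
  | Blind "('n, 'f) trm" "('n, 'f) trm"
  | Pr "('n, 'f) trm" "('n, 'f) trm"
  | Enc "('n, 'f) trm" "('n, 'f) trm"     (* Enc M K = {M}_K *)
  | Fn 'f "('n, 'f) trm list"

primrec vars :: "('n, 'f) trm \<Rightarrow> nat set" where
  "vars (Nm a) = {}"
| "vars (V x) = {x}"
| "vars (Pub t) = vars t"
| "vars (Sign s t) = vars s \<union> vars t"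
| "vars (Blind s t) = vars s \<union> vars t"
| "vars (Pr s t) = vars s \<union> vars t"
| "vars (Enc s t) = vars s \<union> vars t"
| "vars (Fn f ts) = \<Union> (set (map vars ts))"

definition ground :: "('n, 'f) trm \<Rightarrow> bool" where
  "ground t \<longleftrightarrow> vars t = {}"

primrec subst :: "(nat \<Rightarrow> ('n, 'f) trm) \<Rightarrow> ('n, 'f) trm \<Rightarrow> ('n, 'f) trm" where
  "subst \<sigma> (Nm a) = Nm a"
| "subst \<sigma> (V x) = \<sigma> x"
| "subst \<sigma> (Pub t) = Pub (subst \<sigma> t)"
| "subst \<sigma> (Sign s t) = Sign (subst \<sigma> s) (subst \<sigma> t)"
| "subst \<sigma> (Blind s t) = Blind (subst \<sigma> s) (subst \<sigma> t)"
| "subst \<sigma> (Pr s t) = Pr (subst \<sigma> s) (subst \<sigma> t)"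
| "subst \<sigma> (Enc s t) = Enc (subst \<sigma> s) (subst \<sigma> t)"
| "subst \<sigma> (Fn f ts) = Fn f (map (subst \<sigma>) ts)"

primrec wft :: "('f \<Rightarrow> nat) \<Rightarrow> ('n, 'f) trm \<Rightarrow> bool" where
  "wft ar (Nm a) = True"
| "wft ar (V x) = True"
| "wft ar (Pub t) = wft ar t"
| "wft ar (Sign s t) = (wft ar s \<and> wft ar t)"
| "wft ar (Blind s t) = (wft ar s \<and> wft ar t)"
| "wft ar (Pr s t) = (wft ar s \<and> wft ar t)"
| "wft ar (Enc s t) = (wft ar s \<and> wft ar t)"
| "wft ar (Fn f ts) = (length ts = ar f \<and> list_all id (map (wft ar) ts))"

text \<open>Terms built only from symbols of Sigma_E and variables (variables = holes).
  An E-context is such a term; C[M_1,...,M_k] is obtained by substitution.\<close>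
primrec is_ectx :: "('n, 'f) trm \<Rightarrow> bool" where
  "is_ectx (Nm a) = False"
| "is_ectx (V x) = True"
| "is_ectx (Pub t) = False"
| "is_ectx (Sign s t) = False"
| "is_ectx (Blind s t) = False"
| "is_ectx (Pr s t) = False"
| "is_ectx (Enc s t) = False"
| "is_ectx (Fn f ts) = list_all id (map is_ectx ts)"

primrec funs :: "('n, 'f) trm \<Rightarrow> 'f set" where
  "funs (Nm a) = {}"
| "funs (V x) = {}"
| "funs (Pub t) = funs t"
| "funs (Sign s t) = funs s \<union> funs t"
| "funs (Blind s t) = funs s \<union> funs t"
| "funs (Pr s t) = funs s \<union> funs t"
| "funs (Enc s t) = funs s \<union> funs t"
| "funs (Fn f ts) = insert f (\<Union> (set (map funs ts)))"

primrec subterms :: "('n, 'f) trm \<Rightarrow> ('n, 'f) trm set" where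
  "subterms (Nm a) = {Nm a}"
| "subterms (V x) = {V x}"
| "subterms (Pub t) = insert (Pub t) (subterms t)"
| "subterms (Sign s t) = insert (Sign s t) (subterms s \<union> subterms t)"
| "subterms (Blind s t) = insert (Blind s t) (subterms s \<union> subterms t)"
| "subterms (Pr s t) = insert (Pr s t) (subterms s \<union> subterms t)"
| "subterms (Enc s t) = insert (Enc s t) (subterms s \<union> subterms t)"
| "subterms (Fn f ts) = insert (Fn f ts) (\<Union> (set (map subterms ts)))"

primrec guarded :: "('n, 'f) trm \<Rightarrow> bool" where
  "guarded (Nm a) = True"
| "guarded (V x) = True"
| "guarded (Pub t) = True"
| "guarded (Sign s t) = True"
| "guarded (Blind s t) = True"
| "guarded (Pr s t) = True"
| "guarded (Enc s t) = True"
| "guarded (Fn f ts) = False"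

inductive ac_eq :: "'f set \<Rightarrow> ('n, 'f) trm \<Rightarrow> ('n, 'f) trm \<Rightarrow> bool" for acs where
  refl: "ac_eq acs t t"
| sym: "ac_eq acs s t \<Longrightarrow> ac_eq acs t s"
| trans: "ac_eq acs s t \<Longrightarrow> ac_eq acs t u \<Longrightarrow> ac_eq acs s u"
| pub: "ac_eq acs s s' \<Longrightarrow> ac_eq acs (Pub s) (Pub s')"
| sign: "ac_eq acs s s' \<Longrightarrow> ac_eq acs t t' \<Longrightarrow> ac_eq acs (Sign s t) (Sign s' t')"
| blind: "ac_eq acs s s' \<Longrightarrow> ac_eq acs t t' \<Longrightarrow> ac_eq acs (Blind s t) (Blind s' t')"
| pair: "ac_eq acs s s' \<Longrightarrow> ac_eq acs t t' \<Longrightarrow> ac_eq acs (Pr s t) (Pr s' t')"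
| enc: "ac_eq acs s s' \<Longrightarrow> ac_eq acs t t' \<Longrightarrow> ac_eq acs (Enc s t) (Enc s' t')"
| fn: "list_all2 (ac_eq acs) ts ts' \<Longrightarrow> ac_eq acs (Fn f ts) (Fn f ts')"
| comm: "f \<in> acs \<Longrightarrow> ac_eq acs (Fn f [s, t]) (Fn f [t, s])"
| assoc: "f \<in> acs \<Longrightarrow> ac_eq acs (Fn f [Fn f [s, t], u]) (Fn f [s, Fn f [t, u]])"

type_synonym ('n, 'f) rules = "(('n, 'f) trm \<times> ('n, 'f) trm) set"

inductive rstep :: "('n, 'f) rules \<Rightarrow> ('n, 'f) trm \<Rightarrow> ('n, 'f) trm \<Rightarrow> bool" for R where
  rule: "(l, r) \<in> R \<Longrightarrow> rstep R (subst \<sigma> l) (subst \<sigma> r)"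
| pub: "rstep R s s' \<Longrightarrow> rstep R (Pub s) (Pub s')"
| sign1: "rstep R s s' \<Longrightarrow> rstep R (Sign s t) (Sign s' t)"
| sign2: "rstep R t t' \<Longrightarrow> rstep R (Sign s t) (Sign s t')"
| blind1: "rstep R s s' \<Longrightarrow> rstep R (Blind s t) (Blind s' t)"
| blind2: "rstep R t t' \<Longrightarrow> rstep R (Blind s t) (Blind s t')"
| pair1: "rstep R s s' \<Longrightarrow> rstep R (Pr s t) (Pr s' t)"
| pair2: "rstep R t t' \<Longrightarrow> rstep R (Pr s t) (Pr s t')"
| enc1: "rstep R s s' \<Longrightarrow> rstep R (Enc s t) (Enc s' t)"
| enc2: "rstep R t t' \<Longrightarrow> rstep R (Enc s t) (Enc s t')"
| fn: "rstep R s s' \<Longrightarrow> rstep R (Fn f (us @ s # vs)) (Fn f (us @ s' # vs))"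

definition step_mod :: "('n, 'f) rules \<Rightarrow> 'f set \<Rightarrow> ('n, 'f) trm \<Rightarrow> ('n, 'f) trm \<Rightarrow> bool" where
  "step_mod R acs t t' \<longleftrightarrow> (\<exists>s s'. ac_eq acs t s \<and> rstep R s s' \<and> ac_eq acs s' t')"

definition normal :: "('n, 'f) rules \<Rightarrow> 'f set \<Rightarrow> ('n, 'f) trm \<Rightarrow> bool" where
  "normal R acs t \<longleftrightarrow> \<not> (\<exists>t'. step_mod R acs t t')"

text \<open>N is (a representative of) the normal form \<down>t of t modulo AC.\<close>
definition is_nf :: "('n, 'f) rules \<Rightarrow> 'f set \<Rightarrow> ('n, 'f) trm \<Rightarrow> ('n, 'f) trm \<Rightarrow> bool" where
  "is_nf R acs t N \<longleftrightarrow>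
     (\<exists>N0. (step_mod R acs)\<^sup>*\<^sup>* t N0 \<and> ac_eq acs N0 N) \<and> normal R acs N"

text \<open>Equality modulo E, where E is presented by R together with AC.\<close>
definition eqE :: "('n, 'f) rules \<Rightarrow> 'f set \<Rightarrow> ('n, 'f) trm \<Rightarrow> ('n, 'f) trm \<Rightarrow> bool" where
  "eqE R acs = (\<lambda>s t. rstep R s t \<or> rstep R t s \<or> ac_eq acs s t)\<^sup>*\<^sup>*"

definition rewrite_system :: "('f \<Rightarrow> nat) \<Rightarrow> ('n, 'f) rules \<Rightarrow> bool" where
  "rewrite_system ar R \<longleftrightarrow>
     (\<forall>(l, r) \<in> R. wft ar l \<and> wft ar r \<and> is_ectx l \<and> is_ectx r
                   \<and> vars r \<subseteq> vars l \<and> (\<forall>x. l \<noteq> V x))"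

definition terminating_mod :: "('f \<Rightarrow> nat) \<Rightarrow> ('n, 'f) rules \<Rightarrow> 'f set \<Rightarrow> bool" where
  "terminating_mod ar R acs \<longleftrightarrow>
     \<not> (\<exists>sq. wft ar (sq 0) \<and> (\<forall>i. step_mod R acs (sq i) (sq (Suc i))))"

definition confluent_mod :: "('f \<Rightarrow> nat) \<Rightarrow> ('n, 'f) rules \<Rightarrow> 'f set \<Rightarrow> bool" where
  "confluent_mod ar R acs \<longleftrightarrow>
     (\<forall>t u v. wft ar t \<longrightarrow> (step_mod R acs)\<^sup>*\<^sup>* t u \<longrightarrow> (step_mod R acs)\<^sup>*\<^sup>* t v \<longrightarrow>
        (\<exists>u' v'. (step_mod R acs)\<^sup>*\<^sup>* u u' \<and> (step_mod R acs)\<^sup>*\<^sup>* v v' \<and> ac_eq acs u' v'))"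

definition ac_convergent :: "('f \<Rightarrow> nat) \<Rightarrow> ('n, 'f) rules \<Rightarrow> 'f set \<Rightarrow> bool" where
  "ac_convergent ar R acs \<longleftrightarrow>
     rewrite_system ar R \<and> terminating_mod ar R acs \<and> confluent_mod ar R acs"

text \<open>Standing assumptions on E: Sigma_E (= all of 'f, arity ar) is partitioned into the
  signatures Sigma_i = {f. th f = i}, i < n, of the theories E_1..E_n; E_i is presented by
  the AC-convergent rewrite system Rs i (using only symbols of Sigma_i) modulo its AC
  symbols, of which there is at most one; ac is the set of all AC symbols (binary);
  R = R_E is the union of the Rs i and is terminating and confluent modulo AC.\<close>
definition E_theory :: "('f \<Rightarrow> nat) \<Rightarrow> 'f set \<Rightarrow> ('f \<Rightarrow> nat) \<Rightarrow> nat
    \<Rightarrow> (nat \<Rightarrow> ('n, 'f) rules) \<Rightarrow> ('n, 'f) rules \<Rightarrow> bool" where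
  "E_theory ar ac th n Rs R \<longleftrightarrow>
     (\<forall>f \<in> ac. ar f = 2) \<and>
     (\<forall>f. th f < n) \<and>
     (\<forall>f \<in> ac. \<forall>g \<in> ac. th f = th g \<longrightarrow> f = g) \<and>
     R = (\<Union>i<n. Rs i) \<and>
     (\<forall>i<n. (\<forall>(l, r) \<in> Rs i. funs l \<union> funs r \<subseteq> {f. th f = i})
            \<and> ac_convergent ar (Rs i) (ac \<inter> {f. th f = i})) \<and>
     ac_convergent ar R ac"

definition seq_ok :: "('f \<Rightarrow> nat) \<Rightarrow> 'f set \<Rightarrow> ('n, 'f) rules
    \<Rightarrow> ('n, 'f) trm set \<Rightarrow> ('n, 'f) trm \<Rightarrow> bool" where
  "seq_ok ar ac R \<Gamma> M \<longleftrightarrow> finite \<Gamma> \<and>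
     (\<forall>t \<in> insert M \<Gamma>. ground t \<and> wft ar t \<and> normal R ac t)"

text \<open>cfd ar ac R Gamma M: there is a cut-free derivation of Gamma |- M in S
  (all rules of S except (cut)).\<close>
inductive cfd :: "('f \<Rightarrow> nat) \<Rightarrow> 'f set \<Rightarrow> ('n, 'f) rules
    \<Rightarrow> ('n, 'f) trm set \<Rightarrow> ('n, 'f) trm \<Rightarrow> bool" for ar ac R where
  ident: "seq_ok ar ac R \<Gamma> M \<Longrightarrow> is_ectx C \<Longrightarrow> wft ar C \<Longrightarrow> (\<forall>x \<in> vars C. \<sigma> x \<in> \<Gamma>)
     \<Longrightarrow> eqE R ac M (subst \<sigma> C) \<Longrightarrow> cfd ar ac R \<Gamma> M"
| pL: "seq_ok ar ac R \<Gamma> T \<Longrightarrow> Pr M N \<in> \<Gamma> \<Longrightarrow> cfd ar ac R (\<Gamma> \<union> {M, N}) T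
     \<Longrightarrow> cfd ar ac R \<Gamma> T"
| pR: "seq_ok ar ac R \<Gamma> (Pr M N) \<Longrightarrow> cfd ar ac R \<Gamma> M \<Longrightarrow> cfd ar ac R \<Gamma> N
     \<Longrightarrow> cfd ar ac R \<Gamma> (Pr M N)"
| eL: "seq_ok ar ac R \<Gamma> N \<Longrightarrow> Enc M K \<in> \<Gamma> \<Longrightarrow> cfd ar ac R \<Gamma> K
     \<Longrightarrow> cfd ar ac R (\<Gamma> \<union> {M, K}) N \<Longrightarrow> cfd ar ac R \<Gamma> N"
| eR: "seq_ok ar ac R \<Gamma> (Enc M K) \<Longrightarrow> cfd ar ac R \<Gamma> M \<Longrightarrow> cfd ar ac R \<Gamma> K
     \<Longrightarrow> cfd ar ac R \<Gamma> (Enc M K)"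
| signL: "seq_ok ar ac R \<Gamma> N \<Longrightarrow> Sign M K \<in> \<Gamma> \<Longrightarrow> Pub L \<in> \<Gamma> \<Longrightarrow> ac_eq ac K L
     \<Longrightarrow> cfd ar ac R (insert M \<Gamma>) N \<Longrightarrow> cfd ar ac R \<Gamma> N"
| signR: "seq_ok ar ac R \<Gamma> (Sign M K) \<Longrightarrow> cfd ar ac R \<Gamma> M \<Longrightarrow> cfd ar ac R \<Gamma> K
     \<Longrightarrow> cfd ar ac R \<Gamma> (Sign M K)"
| blindL1: "seq_ok ar ac R \<Gamma> N \<Longrightarrow> Blind M K \<in> \<Gamma> \<Longrightarrow> cfd ar ac R \<Gamma> K
     \<Longrightarrow> cfd ar ac R (\<Gamma> \<union> {M, K}) N \<Longrightarrow> cfd ar ac R \<Gamma> N"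
| blindR: "seq_ok ar ac R \<Gamma> (Blind M K) \<Longrightarrow> cfd ar ac R \<Gamma> M \<Longrightarrow> cfd ar ac R \<Gamma> K
     \<Longrightarrow> cfd ar ac R \<Gamma> (Blind M K)"
| blindL2: "seq_ok ar ac R \<Gamma> N \<Longrightarrow> Sign (Blind M Q) K \<in> \<Gamma> \<Longrightarrow> cfd ar ac R \<Gamma> Q
     \<Longrightarrow> cfd ar ac R (\<Gamma> \<union> {Sign M K, Q}) N \<Longrightarrow> cfd ar ac R \<Gamma> N"
| gs: "seq_ok ar ac R \<Gamma> M \<Longrightarrow> t \<in> insert M \<Gamma> \<Longrightarrow> A \<in> subterms t \<Longrightarrow> guarded A
     \<Longrightarrow> cfd ar ac R \<Gamma> A \<Longrightarrow> cfd ar ac R (insert A \<Gamma>) M \<Longrightarrow> cfd ar ac R \<Gamma> M"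

end

theory Submission
  imports Defs
begin


lemma ac_sym': "ac_eq acs s t \<Longrightarrow> ac_eq acs t s" by (rule ac_eq.sym)

fun shp :: "'f set \<Rightarrow> ('n,'f) trm \<Rightarrow> ('n,'f) trm \<Rightarrow> bool" where
  "shp acs (Nm a) t = (t = Nm a)"
| "shp acs (V x) t = (t = V x)"
| "shp acs (Pub s) t = (\<exists>s'. t = Pub s' \<and> ac_eq acs s s')"
| "shp acs (Sign s u) t = (\<exists>s' u'. t = Sign s' u' \<and> ac_eq acs s s' \<and> ac_eq acs u u')"
| "shp acs (Blind s u) t = (\<exists>s' u'. t = Blind s' u' \<and> ac_eq acs s s' \<and> ac_eq acs u u')"
| "shp acs (Pr s u) t = (\<exists>s' u'. t = Pr s' u' \<and> ac_eq acs s s' \<and> ac_eq acs u u')"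
| "shp acs (Enc s u) t = (\<exists>s' u'. t = Enc s' u' \<and> ac_eq acs s s' \<and> ac_eq acs u u')"
| "shp acs (Fn f ts) t = (\<exists>ts'. t = Fn f ts')"

lemma shp_refl: "shp acs t t" by (cases t) (auto intro: ac_eq.refl)
lemma shp_sym: "shp acs s t \<Longrightarrow> shp acs t s" by (cases s) (auto intro: ac_eq.sym)
lemma shp_trans: "shp acs s t \<Longrightarrow> shp acs t u \<Longrightarrow> shp acs s u"
  by (cases s) (auto, (metis ac_eq.trans)+)
lemma ac_shp: "ac_eq acs s t \<Longrightarrow> shp acs s t"
  by (induction rule: ac_eq.induct) (auto intro: shp_refl shp_sym shp_trans)

lemma subterms_refl: "t \<in> subterms t" by (cases t) auto
lemma subterms_trans: "A \<in> subterms B \<Longrightarrow> B \<in> subterms C \<Longrightarrow> A \<in> subterms C"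
  by (induction C) auto
lemma subterm_vars: "A \<in> subterms t \<Longrightarrow> vars A \<subseteq> vars t" by (induction t) auto
lemma subterm_wft: "A \<in> subterms t \<Longrightarrow> wft ar t \<Longrightarrow> wft ar A"
  by (induction t) (auto simp: list_all_iff)

definition subQ where
  "subQ acs s t \<longleftrightarrow> (\<forall>A\<in>subterms t. guarded A \<longrightarrow> (\<exists>B\<in>subterms s. guarded B \<and> ac_eq acs B A))"

lemma l2_ex1: "list_all2 P xs ys \<Longrightarrow> y \<in> set ys \<Longrightarrow> \<exists>x\<in>set xs. P x y"
  by (induction rule: list_all2_induct) auto
lemma l2_ex2: "list_all2 P xs ys \<Longrightarrow> x \<in> set xs \<Longrightarrow> \<exists>y\<in>set ys. P x y"
  by (induction rule: list_all2_induct) auto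

lemma ac_subQ: "ac_eq acs s t \<Longrightarrow> subQ acs s t \<and> subQ acs t s"
proof (induction rule: ac_eq.induct)
  case (refl t) then show ?case unfolding subQ_def by (blast intro: ac_eq.refl)
next
  case (sym s t) then show ?case by blast
next
  case (trans s t u) then show ?case unfolding subQ_def by (meson ac_eq.trans)
next
  case (pub s s') then show ?case unfolding subQ_def by (auto intro: ac_eq.intros)
next
  case (sign s s' t t') then show ?case unfolding subQ_def by (auto intro: ac_eq.intros)
next
  case (blind s s' t t') then show ?case unfolding subQ_def by (auto intro: ac_eq.intros)
next
  case (pair s s' t t') then show ?case unfolding subQ_def by (auto intro: ac_eq.intros)
next
  case (enc s s' t t') then show ?case unfolding subQ_def by (auto intro: ac_eq.intros)
next
  case (fn ts ts' f)
  show ?case unfolding subQ_def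
  proof (intro conjI ballI impI)
    fix A assume A: "A \<in> subterms (Fn f ts')" "guarded A"
    then obtain t' where t': "t' \<in> set ts'" "A \<in> subterms t'" by auto
    from l2_ex1[OF fn t'(1)] obtain t where "t \<in> set ts" "subQ acs t t'" by blast
    with t' A show "\<exists>B\<in>subterms (Fn f ts). guarded B \<and> ac_eq acs B A"
      unfolding subQ_def by fastforce
  next
    fix A assume A: "A \<in> subterms (Fn f ts)" "guarded A"
    then obtain t where t: "t \<in> set ts" "A \<in> subterms t" by auto
    from l2_ex2[OF fn t(1)] obtain t' where "t' \<in> set ts'" "subQ acs t' t" by blast
    with t A show "\<exists>B\<in>subterms (Fn f ts'). guarded B \<and> ac_eq acs B A"
      unfolding subQ_def by fastforce
  qed
next
  case (comm f s t) then show ?case unfolding subQ_def by (auto intro: ac_eq.refl)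
next
  case (assoc f s t u) then show ?case unfolding subQ_def by (auto intro: ac_eq.refl)
qed


lemma E2: "x \<in> vars l \<Longrightarrow> \<sigma> x \<in> subterms (subst \<sigma> l)"
  by (induction l) (auto simp: subterms_refl)

lemma E1: "is_ectx r \<Longrightarrow> A \<in> subterms (subst \<sigma> r) \<Longrightarrow> guarded A \<Longrightarrow> \<exists>x\<in>vars r. A \<in> subterms (\<sigma> x)"
  by (induction r) (auto simp: list_all_iff, blast)

lemma l2refl: "list_all2 (ac_eq ac) xs xs" by (rule list_all2_refl) (rule ac_eq.refl)

lemma rstep_not_normal: "rstep R s s' \<Longrightarrow> normal R ac s \<Longrightarrow> False"
  unfolding normal_def step_mod_def by (blast intro: ac_eq.refl)

lemma RS:
  assumes "rstep R s s'" "rewrite_system ar R"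
  shows "(\<forall>A\<in>subterms s. guarded A \<longrightarrow> normal R ac A) \<Longrightarrow> (\<forall>A\<in>subterms s'. guarded A \<longrightarrow> A \<in> subterms s)"
using assms(1) proof (induction rule: rstep.induct)
  case (rule l r \<sigma>)
  have "is_ectx r" "vars r \<subseteq> vars l" using rule.hyps assms(2) unfolding rewrite_system_def by auto
  show ?case
  proof (intro ballI impI)
    fix A assume "A \<in> subterms (subst \<sigma> r)" "guarded A"
    from E1[OF \<open>is_ectx r\<close> this] obtain x where "x \<in> vars r" "A \<in> subterms (\<sigma> x)" by blast
    with \<open>vars r \<subseteq> vars l\<close> E2[of x l \<sigma>] show "A \<in> subterms (subst \<sigma> l)"
      using subterms_trans by blast
  qed
next
  case (fn s s' f us vs)
  have "\<forall>A\<in>subterms s. guarded A \<longrightarrow> normal R ac A" using fn.prems by auto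
  with fn.IH show ?case by auto
next
  case (pub s s')
  have "normal R ac (Pub s)" using pub.prems subterms_refl[of "Pub s"] by simp
  then show ?case using rstep_not_normal[OF rstep.pub[OF pub.hyps(1)]] by blast
next
  case (sign1 s s' t)
  have "normal R ac (Sign s t)" using sign1.prems subterms_refl[of "Sign s t"] by simp
  then show ?case using rstep_not_normal[OF rstep.sign1[OF sign1.hyps(1)]] by blast
next
  case (sign2 t t' s)
  have "normal R ac (Sign s t)" using sign2.prems subterms_refl[of "Sign s t"] by simp
  then show ?case using rstep_not_normal[OF rstep.sign2[OF sign2.hyps(1)]] by blast
next
  case (blind1 s s' t)
  have "normal R ac (Blind s t)" using blind1.prems subterms_refl[of "Blind s t"] by simp
  then show ?case using rstep_not_normal[OF rstep.blind1[OF blind1.hyps(1)]] by blast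
next
  case (blind2 t t' s)
  have "normal R ac (Blind s t)" using blind2.prems subterms_refl[of "Blind s t"] by simp
  then show ?case using rstep_not_normal[OF rstep.blind2[OF blind2.hyps(1)]] by blast
next
  case (pair1 s s' t)
  have "normal R ac (Pr s t)" using pair1.prems subterms_refl[of "Pr s t"] by simp
  then show ?case using rstep_not_normal[OF rstep.pair1[OF pair1.hyps(1)]] by blast
next
  case (pair2 t t' s)
  have "normal R ac (Pr s t)" using pair2.prems subterms_refl[of "Pr s t"] by simp
  then show ?case using rstep_not_normal[OF rstep.pair2[OF pair2.hyps(1)]] by blast
next
  case (enc1 s s' t)
  have "normal R ac (Enc s t)" using enc1.prems subterms_refl[of "Enc s t"] by simp
  then show ?case using rstep_not_normal[OF rstep.enc1[OF enc1.hyps(1)]] by blast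
next
  case (enc2 t t' s)
  have "normal R ac (Enc s t)" using enc2.prems subterms_refl[of "Enc s t"] by simp
  then show ?case using rstep_not_normal[OF rstep.enc2[OF enc2.hyps(1)]] by blast
qed

lemma sm_pub: "step_mod R ac s s' \<Longrightarrow> step_mod R ac (Pub s) (Pub s')"
  unfolding step_mod_def by (meson ac_eq.intros rstep.intros)
lemma sm_sign1: "step_mod R ac s s' \<Longrightarrow> step_mod R ac (Sign s t) (Sign s' t)"
  unfolding step_mod_def by (meson ac_eq.intros rstep.intros)
lemma sm_sign2: "step_mod R ac s s' \<Longrightarrow> step_mod R ac (Sign t s) (Sign t s')"
  unfolding step_mod_def by (meson ac_eq.intros rstep.intros)
lemma sm_blind1: "step_mod R ac s s' \<Longrightarrow> step_mod R ac (Blind s t) (Blind s' t)"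
  unfolding step_mod_def by (meson ac_eq.intros rstep.intros)
lemma sm_blind2: "step_mod R ac s s' \<Longrightarrow> step_mod R ac (Blind t s) (Blind t s')"
  unfolding step_mod_def by (meson ac_eq.intros rstep.intros)
lemma sm_pr1: "step_mod R ac s s' \<Longrightarrow> step_mod R ac (Pr s t) (Pr s' t)"
  unfolding step_mod_def by (meson ac_eq.intros rstep.intros)
lemma sm_pr2: "step_mod R ac s s' \<Longrightarrow> step_mod R ac (Pr t s) (Pr t s')"
  unfolding step_mod_def by (meson ac_eq.intros rstep.intros)
lemma sm_enc1: "step_mod R ac s s' \<Longrightarrow> step_mod R ac (Enc s t) (Enc s' t)"
  unfolding step_mod_def by (meson ac_eq.intros rstep.intros)
lemma sm_enc2: "step_mod R ac s s' \<Longrightarrow> step_mod R ac (Enc t s) (Enc t s')"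
  unfolding step_mod_def by (meson ac_eq.intros rstep.intros)

lemma sm_lift: "step_mod R ac A A'' \<Longrightarrow> A \<in> subterms X \<Longrightarrow> \<exists>X'. step_mod R ac X X'"
proof (induction X)
  case (Fn g ts)
  show ?case
  proof (cases "A = Fn g ts")
    case True with Fn show ?thesis by blast
  next
    case False
    then obtain t where t: "t \<in> set ts" "A \<in> subterms t" using Fn.prems by auto
    then obtain t' where "step_mod R ac t t'" using Fn by blast
    then obtain a b where ab: "ac_eq ac t a" "rstep R a b" "ac_eq ac b t'" unfolding step_mod_def by blast
    obtain us vs where ts: "ts = us @ t # vs" using split_list[OF t(1)] by blast
    have "ac_eq ac (Fn g ts) (Fn g (us @ a # vs))" unfolding ts
      by (rule ac_eq.fn) (intro list_all2_appendI l2refl list_all2_Cons[THEN iffD2] conjI ab)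
    moreover have "rstep R (Fn g (us @ a # vs)) (Fn g (us @ b # vs))" by (rule rstep.fn[OF ab(2)])
    ultimately show ?thesis unfolding step_mod_def by (blast intro: ac_eq.refl)
  qed
qed (auto, (blast intro: sm_pub sm_sign1 sm_sign2 sm_blind1 sm_blind2 sm_pr1 sm_pr2 sm_enc1 sm_enc2)+)

lemma normal_sub: "normal R ac X \<Longrightarrow> A \<in> subterms X \<Longrightarrow> normal R ac A"
  using sm_lift unfolding normal_def by blast

lemma normal_ac: "ac_eq ac A B \<Longrightarrow> normal R ac B \<Longrightarrow> normal R ac A"
  unfolding normal_def step_mod_def by (blast intro: ac_eq.trans ac_eq.sym)

lemma subst_fn: "is_ectx l \<Longrightarrow> (\<forall>x. l \<noteq> V x) \<Longrightarrow> \<exists>g ts. subst \<sigma> l = Fn g ts"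
  by (cases l) auto

lemma normal_sign:
  assumes rs: "rewrite_system ar R" and "normal R ac M" "normal R ac K"
  shows "normal R ac (Sign M K)"
proof -
  { fix z assume "step_mod R ac (Sign M K) z"
    then obtain s s' where ss: "ac_eq ac (Sign M K) s" "rstep R s s'" unfolding step_mod_def by blast
    from ac_shp[OF ss(1)] obtain m k where mk: "s = Sign m k" "ac_eq ac M m" "ac_eq ac K k" by auto
    from ss(2)[unfolded mk(1)] have False
    proof (cases rule: rstep.cases)
      case (rule l r \<sigma>)
      then have "is_ectx l" "\<forall>x. l \<noteq> V x" using rs unfolding rewrite_system_def by auto
      from subst_fn[OF this, of \<sigma>] rule show False by auto
    next
      case (sign1 m')
      then have "step_mod R ac M m'" using mk unfolding step_mod_def by (blast intro: ac_eq.refl)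
      then show False using assms(2) unfolding normal_def by blast
    next
      case (sign2 k')
      then have "step_mod R ac K k'" using mk unfolding step_mod_def by (blast intro: ac_eq.refl)
      then show False using assms(3) unfolding normal_def by blast
    qed }
  then show ?thesis unfolding normal_def by blast
qed

lemma eqE_refl: "eqE R ac t t" unfolding eqE_def by simp
lemma eqE_trans: "eqE R ac s t \<Longrightarrow> eqE R ac t u \<Longrightarrow> eqE R ac s u" unfolding eqE_def by simp
lemma eqE_ac: "ac_eq ac s t \<Longrightarrow> eqE R ac s t" unfolding eqE_def by (simp add: r_into_rtranclp)
lemma eqE_sym: "eqE R ac s t \<Longrightarrow> eqE R ac t s"
  unfolding eqE_def
proof (induction rule: rtranclp_induct)
  case (step y z)
  then have "(\<lambda>s t. rstep R s t \<or> rstep R t s \<or> ac_eq ac s t) z y" by (blast intro: ac_eq.sym)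
  with step.IH show ?case by (simp add: converse_rtranclp_into_rtranclp)
qed simp

lemma steps_eqE: "(step_mod R ac)\<^sup>*\<^sup>* s t \<Longrightarrow> eqE R ac s t"
proof (induction rule: rtranclp_induct)
  case base then show ?case by (rule eqE_refl)
next
  case (step y z)
  then obtain a b where "ac_eq ac y a" "rstep R a b" "ac_eq ac b z" unfolding step_mod_def by blast
  then have "eqE R ac y a" "eqE R ac a b" "eqE R ac b z" unfolding eqE_def by (auto intro: r_into_rtranclp)
  then have "eqE R ac y z" by (meson eqE_trans)
  with step.IH show ?case by (rule eqE_trans)
qed

lemma eqE_fn1: "eqE R ac a b \<Longrightarrow> eqE R ac (Fn g (us@a#vs)) (Fn g (us@b#vs))"
  unfolding eqE_def
proof (induction rule: rtranclp_induct)
  case (step y z)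
  have l2: "list_all2 (ac_eq ac) (us@y#vs) (us@z#vs)" if "ac_eq ac y z"
    by (intro list_all2_appendI l2refl list_all2_Cons[THEN iffD2] conjI that)
  from step.hyps(2) have "(\<lambda>s t. rstep R s t \<or> rstep R t s \<or> ac_eq ac s t) (Fn g (us@y#vs)) (Fn g (us@z#vs))"
  proof (elim disjE)
    assume "rstep R y z" then show ?thesis using rstep.fn[of R y z g us vs] by simp
  next
    assume "rstep R z y" then show ?thesis using rstep.fn[of R z y g us vs] by simp
  next
    assume "ac_eq ac y z" then show ?thesis using ac_eq.fn[OF l2, of g] by simp
  qed
  with step.IH show ?case by (simp add: rtranclp.rtrancl_into_rtrancl)
qed simp

lemma eqE_fn_aux: "list_all2 (eqE R ac) xs ys \<Longrightarrow> eqE R ac (Fn g (us@xs)) (Fn g (us@ys))"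
proof (induction xs ys arbitrary: us rule: list_all2_induct)
  case Nil then show ?case by (rule eqE_refl)
next
  case (Cons a xs b ys)
  have "eqE R ac (Fn g (us@a#xs)) (Fn g (us@b#xs))" by (rule eqE_fn1[OF Cons.hyps(1)])
  moreover have "eqE R ac (Fn g ((us@[b])@xs)) (Fn g ((us@[b])@ys))" by (rule Cons.IH)
  ultimately show ?case by (auto intro: eqE_trans)
qed

lemma eqE_fn: "list_all2 (eqE R ac) xs ys \<Longrightarrow> eqE R ac (Fn g xs) (Fn g ys)"
  using eqE_fn_aux[where us="[]"] by (metis append_Nil)

lemma eqE_subst: "is_ectx C \<Longrightarrow> (\<forall>x\<in>vars C. eqE R ac (\<sigma> x) (\<sigma>' x)) \<Longrightarrow> eqE R ac (subst \<sigma> C) (subst \<sigma>' C)"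
proof (induction C)
  case (Fn g ts)
  have "\<forall>t\<in>set ts. eqE R ac (subst \<sigma> t) (subst \<sigma>' t)"
  proof
    fix t assume t: "t \<in> set ts"
    have "is_ectx t" using Fn.prems(1) t by (simp add: list_all_iff)
    moreover have "\<forall>x\<in>vars t. eqE R ac (\<sigma> x) (\<sigma>' x)" using Fn.prems(2) t by auto
    ultimately show "eqE R ac (subst \<sigma> t) (subst \<sigma>' t)" using Fn.IH t by blast
  qed
  then have "list_all2 (eqE R ac) (map (subst \<sigma>) ts) (map (subst \<sigma>') ts)"
    by (simp add: list_all2_map1 list_all2_map2 list_all2_same)
  from eqE_fn[OF this, of g] show ?case by (simp only: subst.simps)
next
  case (V x) then show ?case unfolding subst.simps vars.simps by blast
qed (simp_all only: is_ectx.simps)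

lemma subst_subst: "subst \<sigma> (subst \<rho> C) = subst (\<lambda>x. subst \<sigma> (\<rho> x)) C" by (induction C) auto
lemma vars_subst: "vars (subst \<rho> C) = (\<Union>x\<in>vars C. vars (\<rho> x))" by (induction C) auto
lemma ectx_subst: "is_ectx C \<Longrightarrow> (\<forall>x. is_ectx (\<rho> x)) \<Longrightarrow> is_ectx (subst \<rho> C)"
  by (induction C) (auto simp: list_all_iff)
lemma wft_subst: "wft ar C \<Longrightarrow> (\<forall>x. wft ar (\<rho> x)) \<Longrightarrow> wft ar (subst \<rho> C)"
  by (induction C) (auto simp: list_all_iff)


definition item_ok where
  "item_ok ar ac R t \<longleftrightarrow> ground t \<and> wft ar t \<and> normal R ac t"

lemma item_sub: "item_ok ar ac R B \<Longrightarrow> A \<in> subterms B \<Longrightarrow> item_ok ar ac R A"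
  unfolding item_ok_def ground_def using subterm_vars subterm_wft normal_sub by blast

lemma seq_ok_item: "seq_ok ar ac R \<Gamma> T \<Longrightarrow> t \<in> insert T \<Gamma> \<Longrightarrow> item_ok ar ac R t"
  unfolding seq_ok_def item_ok_def by blast

lemma seq_ok_iff: "seq_ok ar ac R \<Gamma> T \<longleftrightarrow> finite \<Gamma> \<and> (\<forall>t\<in>insert T \<Gamma>. item_ok ar ac R t)"
  unfolding seq_ok_def item_ok_def by blast

lemma cfd_seq_ok: "cfd ar ac R \<Gamma> T \<Longrightarrow> seq_ok ar ac R \<Gamma> T"
  by (erule cfd.cases) auto


lemma acinv:
  assumes "cfd ar ac R \<Gamma> T" and rs: "rewrite_system ar R"
  shows "\<And>\<Gamma>' T'. seq_ok ar ac R \<Gamma>' T' \<Longrightarrow> ac_eq ac T T' \<Longrightarrow> (\<forall>B\<in>\<Gamma>. \<exists>B'\<in>\<Gamma>'. ac_eq ac B B')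
     \<Longrightarrow> cfd ar ac R \<Gamma>' T'"
using assms(1) proof (induction rule: cfd.induct)
  case (ident \<Gamma> M C \<sigma>)
  define \<sigma>' where "\<sigma>' x = (SOME b. b \<in> \<Gamma>' \<and> ac_eq ac (\<sigma> x) b)" for x
  have s': "\<sigma>' x \<in> \<Gamma>' \<and> ac_eq ac (\<sigma> x) (\<sigma>' x)" if "x \<in> vars C" for x
  proof -
    have "\<exists>b. b \<in> \<Gamma>' \<and> ac_eq ac (\<sigma> x) b" using ident.hyps(4) ident.prems(3) that by blast
    then show ?thesis unfolding \<sigma>'_def by (rule someI_ex)
  qed
  have e1: "eqE R ac T' M" by (rule eqE_ac[OF ac_eq.sym[OF ident.prems(2)]])
  have e2: "eqE R ac (subst \<sigma> C) (subst \<sigma>' C)"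
    using s' ident.hyps(2) by (intro eqE_subst) (auto intro: eqE_ac)
  have "eqE R ac T' (subst \<sigma>' C)" using eqE_trans[OF e1 eqE_trans[OF ident.hyps(5) e2]] .
  then show ?case using cfd.ident[of ar ac R \<Gamma>' T' C \<sigma>'] ident s' by blast
next
  case (pL \<Gamma> T M N)
  from pL.prems(3) pL.hyps(2) obtain B' where "B' \<in> \<Gamma>'" "ac_eq ac (Pr M N) B'" by blast
  with ac_shp obtain M' N' where B': "B' = Pr M' N'" "ac_eq ac M M'" "ac_eq ac N N'" by fastforce
  have iok: "item_ok ar ac R B'" using seq_ok_item[OF pL.prems(1)] \<open>B' \<in> \<Gamma>'\<close> by blast
  then have "item_ok ar ac R M'" "item_ok ar ac R N'" using item_sub[OF iok] B'(1) by (auto simp: subterms_refl)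
  then have "seq_ok ar ac R (\<Gamma>' \<union> {M', N'}) T'" using pL.prems(1) by (auto simp: seq_ok_iff)
  moreover have "\<forall>B\<in>\<Gamma> \<union> {M, N}. \<exists>B'\<in>\<Gamma>' \<union> {M', N'}. ac_eq ac B B'" using pL.prems(3) B' by blast
  ultimately have "cfd ar ac R (\<Gamma>' \<union> {M', N'}) T'" by (rule pL.IH[OF _ pL.prems(2)])
  then show ?case using cfd.pL[of ar ac R \<Gamma>' T' M' N'] pL.prems(1) \<open>B' \<in> \<Gamma>'\<close> B'(1) by blast
next
  case (pR \<Gamma> M N)
  from ac_shp[OF pR.prems(2)] obtain M' N' where T': "T' = Pr M' N'" "ac_eq ac M M'" "ac_eq ac N N'" by auto
  have iok: "item_ok ar ac R T'" using seq_ok_item[OF pR.prems(1)] by blast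
  then have "item_ok ar ac R M'" "item_ok ar ac R N'" using item_sub[OF iok] T'(1) by (auto simp: subterms_refl)
  then have s1: "seq_ok ar ac R \<Gamma>' M'" and s2: "seq_ok ar ac R \<Gamma>' N'" using pR.prems(1) by (auto simp: seq_ok_iff)
  have "cfd ar ac R \<Gamma>' M'" by (rule pR.IH(1)[OF s1 T'(2) pR.prems(3)])
  moreover have "cfd ar ac R \<Gamma>' N'" by (rule pR.IH(2)[OF s2 T'(3) pR.prems(3)])
  ultimately show ?case using cfd.pR[of ar ac R \<Gamma>' M' N'] pR.prems(1) T'(1) by blast
next
  case (eL \<Gamma> N M K)
  from eL.prems(3) eL.hyps(2) obtain B' where "B' \<in> \<Gamma>'" "ac_eq ac (Enc M K) B'" by blast
  with ac_shp obtain M' K' where B': "B' = Enc M' K'" "ac_eq ac M M'" "ac_eq ac K K'" by fastforce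
  have iok: "item_ok ar ac R B'" using seq_ok_item[OF eL.prems(1)] \<open>B' \<in> \<Gamma>'\<close> by blast
  then have "item_ok ar ac R M'" "item_ok ar ac R K'" using item_sub[OF iok] B'(1) by (auto simp: subterms_refl)
  then have s1: "seq_ok ar ac R (\<Gamma>' \<union> {M', K'}) T'" and s2: "seq_ok ar ac R \<Gamma>' K'" using eL.prems(1) by (auto simp: seq_ok_iff)
  have c: "\<forall>B\<in>\<Gamma> \<union> {M, K}. \<exists>B'\<in>\<Gamma>' \<union> {M', K'}. ac_eq ac B B'" using eL.prems(3) B' by blast
  have "cfd ar ac R (\<Gamma>' \<union> {M', K'}) T'" by (rule eL.IH(2)[OF s1 eL.prems(2) c])
  moreover have "cfd ar ac R \<Gamma>' K'" by (rule eL.IH(1)[OF s2 B'(3) eL.prems(3)])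
  ultimately show ?case using cfd.eL[of ar ac R \<Gamma>' T' M' K'] eL.prems(1) \<open>B' \<in> \<Gamma>'\<close> B'(1) by blast
next
  case (eR \<Gamma> M N)
  from ac_shp[OF eR.prems(2)] obtain M' N' where T': "T' = Enc M' N'" "ac_eq ac M M'" "ac_eq ac N N'" by auto
  have iok: "item_ok ar ac R T'" using seq_ok_item[OF eR.prems(1)] by blast
  then have "item_ok ar ac R M'" "item_ok ar ac R N'" using item_sub[OF iok] T'(1) by (auto simp: subterms_refl)
  then have s1: "seq_ok ar ac R \<Gamma>' M'" and s2: "seq_ok ar ac R \<Gamma>' N'" using eR.prems(1) by (auto simp: seq_ok_iff)
  have "cfd ar ac R \<Gamma>' M'" by (rule eR.IH(1)[OF s1 T'(2) eR.prems(3)])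
  moreover have "cfd ar ac R \<Gamma>' N'" by (rule eR.IH(2)[OF s2 T'(3) eR.prems(3)])
  ultimately show ?case using cfd.eR[of ar ac R \<Gamma>' M' N'] eR.prems(1) T'(1) by blast
next
  case (signL \<Gamma> N M K L)
  from signL.prems(3) signL.hyps(2) obtain B' where "B' \<in> \<Gamma>'" "ac_eq ac (Sign M K) B'" by blast
  with ac_shp obtain M' K' where B': "B' = Sign M' K'" "ac_eq ac M M'" "ac_eq ac K K'" by fastforce
  from signL.prems(3) signL.hyps(3) obtain C' where "C' \<in> \<Gamma>'" "ac_eq ac (Pub L) C'" by blast
  with ac_shp obtain L' where C': "C' = Pub L'" "ac_eq ac L L'" by fastforce
  have KL: "ac_eq ac K' L'" by (rule ac_eq.trans[OF ac_eq.trans[OF ac_eq.sym[OF B'(3)] signL.hyps(4)] C'(2)])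
  have iok: "item_ok ar ac R B'" using seq_ok_item[OF signL.prems(1)] \<open>B' \<in> \<Gamma>'\<close> by blast
  then have "item_ok ar ac R M'" using item_sub[OF iok] B'(1) by (auto simp: subterms_refl)
  then have "seq_ok ar ac R (insert M' \<Gamma>') T'" using signL.prems(1) by (auto simp: seq_ok_iff)
  moreover have "\<forall>B\<in>insert M \<Gamma>. \<exists>B'\<in>insert M' \<Gamma>'. ac_eq ac B B'" using signL.prems(3) B' by blast
  ultimately have "cfd ar ac R (insert M' \<Gamma>') T'" by (rule signL.IH[OF _ signL.prems(2)])
  then show ?case using cfd.signL[of ar ac R \<Gamma>' T' M' K' L'] signL.prems(1) \<open>B' \<in> \<Gamma>'\<close> B'(1)
      \<open>C' \<in> \<Gamma>'\<close> C'(1) KL by blast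
next
  case (signR \<Gamma> M N)
  from ac_shp[OF signR.prems(2)] obtain M' N' where T': "T' = Sign M' N'" "ac_eq ac M M'" "ac_eq ac N N'" by auto
  have iok: "item_ok ar ac R T'" using seq_ok_item[OF signR.prems(1)] by blast
  then have "item_ok ar ac R M'" "item_ok ar ac R N'" using item_sub[OF iok] T'(1) by (auto simp: subterms_refl)
  then have s1: "seq_ok ar ac R \<Gamma>' M'" and s2: "seq_ok ar ac R \<Gamma>' N'" using signR.prems(1) by (auto simp: seq_ok_iff)
  have "cfd ar ac R \<Gamma>' M'" by (rule signR.IH(1)[OF s1 T'(2) signR.prems(3)])
  moreover have "cfd ar ac R \<Gamma>' N'" by (rule signR.IH(2)[OF s2 T'(3) signR.prems(3)])
  ultimately show ?case using cfd.signR[of ar ac R \<Gamma>' M' N'] signR.prems(1) T'(1) by blast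
next
  case (blindL1 \<Gamma> N M K)
  from blindL1.prems(3) blindL1.hyps(2) obtain B' where "B' \<in> \<Gamma>'" "ac_eq ac (Blind M K) B'" by blast
  with ac_shp obtain M' K' where B': "B' = Blind M' K'" "ac_eq ac M M'" "ac_eq ac K K'" by fastforce
  have iok: "item_ok ar ac R B'" using seq_ok_item[OF blindL1.prems(1)] \<open>B' \<in> \<Gamma>'\<close> by blast
  then have "item_ok ar ac R M'" "item_ok ar ac R K'" using item_sub[OF iok] B'(1) by (auto simp: subterms_refl)
  then have s1: "seq_ok ar ac R (\<Gamma>' \<union> {M', K'}) T'" and s2: "seq_ok ar ac R \<Gamma>' K'" using blindL1.prems(1) by (auto simp: seq_ok_iff)
  have c: "\<forall>B\<in>\<Gamma> \<union> {M, K}. \<exists>B'\<in>\<Gamma>' \<union> {M', K'}. ac_eq ac B B'" using blindL1.prems(3) B' by blast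
  have "cfd ar ac R (\<Gamma>' \<union> {M', K'}) T'" by (rule blindL1.IH(2)[OF s1 blindL1.prems(2) c])
  moreover have "cfd ar ac R \<Gamma>' K'" by (rule blindL1.IH(1)[OF s2 B'(3) blindL1.prems(3)])
  ultimately show ?case using cfd.blindL1[of ar ac R \<Gamma>' T' M' K'] blindL1.prems(1) \<open>B' \<in> \<Gamma>'\<close> B'(1) by blast
next
  case (blindR \<Gamma> M N)
  from ac_shp[OF blindR.prems(2)] obtain M' N' where T': "T' = Blind M' N'" "ac_eq ac M M'" "ac_eq ac N N'" by auto
  have iok: "item_ok ar ac R T'" using seq_ok_item[OF blindR.prems(1)] by blast
  then have "item_ok ar ac R M'" "item_ok ar ac R N'" using item_sub[OF iok] T'(1) by (auto simp: subterms_refl)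
  then have s1: "seq_ok ar ac R \<Gamma>' M'" and s2: "seq_ok ar ac R \<Gamma>' N'" using blindR.prems(1) by (auto simp: seq_ok_iff)
  have "cfd ar ac R \<Gamma>' M'" by (rule blindR.IH(1)[OF s1 T'(2) blindR.prems(3)])
  moreover have "cfd ar ac R \<Gamma>' N'" by (rule blindR.IH(2)[OF s2 T'(3) blindR.prems(3)])
  ultimately show ?case using cfd.blindR[of ar ac R \<Gamma>' M' N'] blindR.prems(1) T'(1) by blast
next
  case (blindL2 \<Gamma> N M Q K)
  from blindL2.prems(3) blindL2.hyps(2) obtain B' where "B' \<in> \<Gamma>'" "ac_eq ac (Sign (Blind M Q) K) B'" by blast
  with ac_shp obtain X K' where X: "B' = Sign X K'" "ac_eq ac (Blind M Q) X" "ac_eq ac K K'" by fastforce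
  with ac_shp obtain M' Q' where MQ: "X = Blind M' Q'" "ac_eq ac M M'" "ac_eq ac Q Q'" by fastforce
  have iok: "item_ok ar ac R B'" using seq_ok_item[OF blindL2.prems(1)] \<open>B' \<in> \<Gamma>'\<close> by blast
  then have ok: "item_ok ar ac R M'" "item_ok ar ac R Q'" "item_ok ar ac R K'" using item_sub[OF iok] X(1) MQ(1) by (auto simp: subterms_refl)
  then have "item_ok ar ac R (Sign M' K')"
    using normal_sign[OF rs] unfolding item_ok_def ground_def by auto
  with ok have s1: "seq_ok ar ac R (\<Gamma>' \<union> {Sign M' K', Q'}) T'" and s2: "seq_ok ar ac R \<Gamma>' Q'"
    using blindL2.prems(1) by (auto simp: seq_ok_iff)
  have sg: "ac_eq ac (Sign M K) (Sign M' K')" by (rule ac_eq.sign[OF MQ(2) X(3)])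
  have c: "\<forall>B\<in>\<Gamma> \<union> {Sign M K, Q}. \<exists>B'\<in>\<Gamma>' \<union> {Sign M' K', Q'}. ac_eq ac B B'"
    using blindL2.prems(3) MQ(3) sg by blast
  have "cfd ar ac R (\<Gamma>' \<union> {Sign M' K', Q'}) T'" by (rule blindL2.IH(2)[OF s1 blindL2.prems(2) c])
  moreover have "cfd ar ac R \<Gamma>' Q'" by (rule blindL2.IH(1)[OF s2 MQ(3) blindL2.prems(3)])
  ultimately show ?case using cfd.blindL2[of ar ac R \<Gamma>' T' M' Q' K'] blindL2.prems(1) \<open>B' \<in> \<Gamma>'\<close> X(1) MQ(1) by blast
next
  case (gs \<Gamma> M t A)
  obtain t' where t': "t' \<in> insert T' \<Gamma>'" "ac_eq ac t t'"
    using gs.hyps(2) gs.prems(2,3) by blast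
  from ac_subQ[OF t'(2)] gs.hyps(3,4) obtain B where B: "B \<in> subterms t'" "guarded B" "ac_eq ac B A"
    unfolding subQ_def by blast
  have "item_ok ar ac R t'" using seq_ok_item[OF gs.prems(1) t'(1)] .
  then have "item_ok ar ac R B" using item_sub B(1) by blast
  then have s1: "seq_ok ar ac R \<Gamma>' B" and s2: "seq_ok ar ac R (insert B \<Gamma>') T'" using gs.prems(1) by (auto simp: seq_ok_iff)
  have AB: "ac_eq ac A B" by (rule ac_eq.sym[OF B(3)])
  have c2: "\<forall>C\<in>insert A \<Gamma>. \<exists>C'\<in>insert B \<Gamma>'. ac_eq ac C C'"
    using gs.prems(3) AB by blast
  have "cfd ar ac R \<Gamma>' B" by (rule gs.IH(1)[OF s1 AB gs.prems(3)])
  moreover have "cfd ar ac R (insert B \<Gamma>') T'" by (rule gs.IH(2)[OF s2 gs.prems(2) c2])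
  ultimately show ?case using cfd.gs[of ar ac R \<Gamma>' T' t' B] gs.prems(1) t'(1) B by blast
qed



definition Jp where
  "Jp ac Xs t \<longleftrightarrow> (\<forall>A\<in>subterms t. guarded A \<longrightarrow> (\<exists>X\<in>set Xs. \<exists>B\<in>subterms X. guarded B \<and> ac_eq ac B A))"

lemma Jp_init: "Jp ac Xs (Fn f Xs)" unfolding Jp_def by (auto intro: ac_eq.refl)

lemma Jp_ac: assumes "Jp ac Xs t" "ac_eq ac t t'" shows "Jp ac Xs t'"
  unfolding Jp_def
proof (intro ballI impI)
  fix A assume A: "A \<in> subterms t'" "guarded A"
  from ac_subQ[OF assms(2)] A obtain B where B: "B \<in> subterms t" "guarded B" "ac_eq ac B A"
    unfolding subQ_def by blast
  from assms(1) B obtain X C where "X \<in> set Xs" "C \<in> subterms X" "guarded C" "ac_eq ac C B"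
    unfolding Jp_def by blast
  then show "\<exists>X\<in>set Xs. \<exists>B\<in>subterms X. guarded B \<and> ac_eq ac B A"
    using ac_eq.trans[OF _ B(3)] by blast
qed

lemma Jp_rstep:
  assumes rs: "rewrite_system ar R" and Xn: "\<forall>X\<in>set Xs. normal R ac X"
    and J: "Jp ac Xs s" and st: "rstep R s s'"
  shows "Jp ac Xs s'"
proof -
  have "\<forall>A\<in>subterms s. guarded A \<longrightarrow> normal R ac A"
  proof (intro ballI impI)
    fix A assume "A \<in> subterms s" "guarded A"
    with J obtain X B where XB: "X \<in> set Xs" "B \<in> subterms X" "ac_eq ac B A" unfolding Jp_def by blast
    then have "normal R ac B" using normal_sub Xn by blast
    then show "normal R ac A" using normal_ac[OF ac_eq.sym[OF XB(3)]] by blast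
  qed
  from RS[OF st rs this] J show ?thesis unfolding Jp_def by blast
qed

lemma Jp_steps:
  assumes rs: "rewrite_system ar R" and Xn: "\<forall>X\<in>set Xs. normal R ac X"
  shows "(step_mod R ac)\<^sup>*\<^sup>* (Fn f Xs) t \<Longrightarrow> Jp ac Xs t"
proof (induction rule: rtranclp_induct)
  case base then show ?case by (rule Jp_init)
next
  case (step y z)
  then obtain a b where "ac_eq ac y a" "rstep R a b" "ac_eq ac b z" unfolding step_mod_def by blast
  then show ?case using step.IH Jp_ac Jp_rstep[OF rs Xn] by blast
qed

context
  fixes ar :: "'f \<Rightarrow> nat" and ac :: "'f set" and R :: "('n, 'f) rules" and f :: 'f
    and Xs :: "('n, 'f) trm list" and N :: "('n, 'f) trm"
  assumes rs: "rewrite_system ar R"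
    and Xok: "\<forall>X\<in>set Xs. item_ok ar ac R X"
    and len: "length Xs = ar f"
    and NE: "eqE R ac N (Fn f Xs)"
    and NJ: "Jp ac Xs N"
begin

lemma sq: "seq_ok ar ac R \<Gamma>0 T \<Longrightarrow> seq_ok ar ac R ((\<Gamma>0 - {N}) \<union> set Xs) T"
  using Xok by (auto simp: seq_ok_iff)

lemma derivXs:
  assumes "set Xs \<subseteq> \<Delta>" "seq_ok ar ac R \<Delta> T" "item_ok ar ac R A" "eqE R ac A (Fn f Xs)"
  shows "cfd ar ac R \<Delta> A"
proof -
  let ?C = "Fn f (map V [0..<length Xs]) :: ('n, 'f) trm"
  have e: "subst (\<lambda>i. Xs ! i) ?C = Fn f Xs" by (simp add: o_def map_nth)
  have s: "seq_ok ar ac R \<Delta> A" using assms(2,3) by (auto simp: seq_ok_iff)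
  have ec: "is_ectx ?C" by (simp add: list_all_iff)
  have wf: "wft ar ?C" by (simp add: list_all_iff len)
  have vs: "\<forall>x\<in>vars ?C. Xs ! x \<in> \<Delta>" using assms(1) by auto
  show ?thesis by (rule cfd.ident[OF s ec wf vs]) (simp only: e assms(4))
qed

lemma PL:
  assumes "P \<in> \<Gamma>0" "seq_ok ar ac R \<Gamma>0 T0" "guarded P"
  shows "\<exists>P'. ac_eq ac P P' \<and> item_ok ar ac R P' \<and>
    (\<forall>\<Delta> T. (\<Gamma>0 - {N}) \<union> set Xs \<subseteq> \<Delta> \<longrightarrow> seq_ok ar ac R \<Delta> T \<longrightarrow> cfd ar ac R (insert P' \<Delta>) T \<longrightarrow> cfd ar ac R \<Delta> T)"
proof (cases "P = N")
  case False
  then have "P \<in> (\<Gamma>0 - {N}) \<union> set Xs" using assms by blast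
  moreover have "item_ok ar ac R P" using seq_ok_item[OF assms(2)] assms(1) by blast
  ultimately show ?thesis by (intro exI[of _ P]) (auto intro: ac_eq.refl simp: insert_absorb)
next
  case True
  from NJ subterms_refl[of N] assms(3) True obtain X B where XB: "X \<in> set Xs" "B \<in> subterms X" "guarded B" "ac_eq ac B N"
    unfolding Jp_def by blast
  have iB: "item_ok ar ac R B" using item_sub XB(2) Xok XB(1) by blast
  have eB: "eqE R ac B (Fn f Xs)" by (rule eqE_trans[OF eqE_ac[OF XB(4)] NE])
  have cl: "cfd ar ac R \<Delta> T" if "(\<Gamma>0 - {N}) \<union> set Xs \<subseteq> \<Delta>" "seq_ok ar ac R \<Delta> T" "cfd ar ac R (insert B \<Delta>) T" for \<Delta> T
  proof (rule cfd.gs[of ar ac R \<Delta> T X B])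
    show "seq_ok ar ac R \<Delta> T" by fact
    show "X \<in> insert T \<Delta>" using that(1) XB(1) by blast
    show "B \<in> subterms X" "guarded B" by fact+
    show "cfd ar ac R \<Delta> B" using derivXs[OF _ that(2) iB eB] that(1) by blast
    show "cfd ar ac R (insert B \<Delta>) T" by fact
  qed
  show ?thesis
    apply (rule exI[of _ B])
    using ac_eq.sym[OF XB(4)] True iB cl by blast
qed


lemma main: "cfd ar ac R \<Gamma>0 T \<Longrightarrow> cfd ar ac R ((\<Gamma>0 - {N}) \<union> set Xs) T"
proof (induction rule: cfd.induct)
  case (ident \<Gamma> M C \<sigma>)
  define k where "k = length Xs"
  define \<rho> :: "nat \<Rightarrow> ('n, 'f) trm" where
    "\<rho> x = (if \<sigma> x = N then Fn f (map (\<lambda>i. V (2*i+1)) [0..<k]) else V (2*x))" for x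
  define \<sigma>' where "\<sigma>' y = (if even y then \<sigma> (y div 2) else Xs ! (y div 2))" for y
  define \<sigma>'' where "\<sigma>'' x = (if \<sigma> x = N then Fn f Xs else \<sigma> x)" for x
  have comp: "subst \<sigma>' (\<rho> x) = \<sigma>'' x" for x
  proof (cases "\<sigma> x = N")
    case True
    have "map (subst \<sigma>') (map (\<lambda>i. V (2*i+1)) [0..<k]) = Xs"
      by (rule nth_equalityI) (auto simp: \<sigma>'_def k_def)
    then show ?thesis using True by (simp add: \<rho>_def \<sigma>''_def)
  next
    case False then show ?thesis by (simp add: \<rho>_def \<sigma>''_def \<sigma>'_def)
  qed
  have "(\<lambda>x. subst \<sigma>' (\<rho> x)) = \<sigma>''" using comp by blast
  then have sc: "subst \<sigma>' (subst \<rho> C) = subst \<sigma>'' C" by (simp add: subst_subst)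
  have "eqE R ac (subst \<sigma> C) (subst \<sigma>'' C)" using ident.hyps(2)
    by (intro eqE_subst) (auto simp: \<sigma>''_def NE eqE_refl)
  then have e: "eqE R ac M (subst \<sigma>' (subst \<rho> C))" unfolding sc by (rule eqE_trans[OF ident.hyps(5)])
  have ectx: "is_ectx (subst \<rho> C)" by (rule ectx_subst[OF ident.hyps(2)]) (auto simp: \<rho>_def list_all_iff)
  have wf: "wft ar (subst \<rho> C)" by (rule wft_subst[OF ident.hyps(3)]) (auto simp: \<rho>_def k_def len list_all_iff)
  have vs: "\<forall>x\<in>vars (subst \<rho> C). \<sigma>' x \<in> (\<Gamma> - {N}) \<union> set Xs"
  proof
    fix y assume "y \<in> vars (subst \<rho> C)"
    then obtain x where x: "x \<in> vars C" "y \<in> vars (\<rho> x)" by (auto simp: vars_subst)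
    show "\<sigma>' y \<in> (\<Gamma> - {N}) \<union> set Xs"
    proof (cases "\<sigma> x = N")
      case True
      then obtain i where "i < k" "y = 2*i+1" using x(2) by (auto simp: \<rho>_def)
      then show ?thesis by (simp add: \<sigma>'_def k_def)
    next
      case False
      then have "y = 2*x" using x(2) by (simp add: \<rho>_def)
      then show ?thesis using False ident.hyps(4) x(1) by (simp add: \<sigma>'_def)
    qed
  qed
  show ?case by (rule cfd.ident[OF sq[OF ident.hyps(1)] ectx wf vs e])
next
  case (pL \<Gamma> T M1 M2)
  let ?G = "(\<Gamma> - {N}) \<union> set Xs"
  from PL[OF pL.hyps(2) pL.hyps(1)] obtain P' where P': "ac_eq ac (Pr M1 M2) P'" "item_ok ar ac R P'"
    and cl: "\<And>\<Delta> T. ?G \<subseteq> \<Delta> \<Longrightarrow> seq_ok ar ac R \<Delta> T \<Longrightarrow> cfd ar ac R (insert P' \<Delta>) T \<Longrightarrow> cfd ar ac R \<Delta> T"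
    by auto
  from ac_shp[OF P'(1)] obtain a b where ab: "P' = Pr a b" "ac_eq ac M1 a" "ac_eq ac M2 b" by auto
  have "item_ok ar ac R a" "item_ok ar ac R b" using item_sub[OF P'(2)] ab(1) by (auto simp: subterms_refl)
  have s0: "seq_ok ar ac R ?G T" by (rule sq[OF pL.hyps(1)])
  have s1: "seq_ok ar ac R (insert P' ?G) T" using s0 P'(2) by (auto simp: seq_ok_iff)
  have s2: "seq_ok ar ac R (insert P' ?G \<union> {a, b}) T"
    using s1 \<open>item_ok ar ac R a\<close> \<open>item_ok ar ac R b\<close> by (auto simp: seq_ok_iff)
  have c: "\<forall>B\<in>((\<Gamma> \<union> {M1, M2}) - {N}) \<union> set Xs. \<exists>B'\<in>insert P' ?G \<union> {a, b}. ac_eq ac B B'"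
    using ab by (blast intro: ac_eq.refl)
  have "cfd ar ac R (insert P' ?G \<union> {a, b}) T" by (rule acinv[OF pL.IH rs s2 ac_eq.refl c])
  then have "cfd ar ac R (insert P' ?G) T" using cfd.pL[of ar ac R "insert P' ?G" T a b] s1 ab(1) by blast
  then show ?case using cl[OF subset_refl s0] by blast
next
  case (pR \<Gamma> M1 M2)
  show ?case by (rule cfd.pR[OF sq[OF pR.hyps(1)] pR.IH(1) pR.IH(2)])
next
  case (eL \<Gamma> T M1 K1)
  let ?G = "(\<Gamma> - {N}) \<union> set Xs"
  from PL[OF eL.hyps(2) eL.hyps(1)] obtain P' where P': "ac_eq ac (Enc M1 K1) P'" "item_ok ar ac R P'"
    and cl: "\<And>\<Delta> T. ?G \<subseteq> \<Delta> \<Longrightarrow> seq_ok ar ac R \<Delta> T \<Longrightarrow> cfd ar ac R (insert P' \<Delta>) T \<Longrightarrow> cfd ar ac R \<Delta> T"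
    by auto
  from ac_shp[OF P'(1)] obtain a b where ab: "P' = Enc a b" "ac_eq ac M1 a" "ac_eq ac K1 b" by auto
  have "item_ok ar ac R a" "item_ok ar ac R b" using item_sub[OF P'(2)] ab(1) by (auto simp: subterms_refl)
  have s0: "seq_ok ar ac R ?G T" by (rule sq[OF eL.hyps(1)])
  have s1: "seq_ok ar ac R (insert P' ?G) T" using s0 P'(2) by (auto simp: seq_ok_iff)
  have s2: "seq_ok ar ac R (insert P' ?G \<union> {a, b}) T"
    using s1 \<open>item_ok ar ac R a\<close> \<open>item_ok ar ac R b\<close> by (auto simp: seq_ok_iff)
  have s3: "seq_ok ar ac R (insert P' ?G) b"
    using s1 \<open>item_ok ar ac R b\<close> by (auto simp: seq_ok_iff)
  have c: "\<forall>B\<in>((\<Gamma> \<union> {M1, K1}) - {N}) \<union> set Xs. \<exists>B'\<in>insert P' ?G \<union> {a, b}. ac_eq ac B B'"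
    using ab by (blast intro: ac_eq.refl)
  have c2: "\<forall>B\<in>?G. \<exists>B'\<in>insert P' ?G. ac_eq ac B B'" by (blast intro: ac_eq.refl)
  have "cfd ar ac R (insert P' ?G \<union> {a, b}) T" by (rule acinv[OF eL.IH(2) rs s2 ac_eq.refl c])
  moreover have "cfd ar ac R (insert P' ?G) b" by (rule acinv[OF eL.IH(1) rs s3 ab(3) c2])
  ultimately have "cfd ar ac R (insert P' ?G) T" using cfd.eL[of ar ac R "insert P' ?G" T a b] s1 ab(1) by blast
  then show ?case using cl[OF subset_refl s0] by blast
next
  case (eR \<Gamma> M1 M2)
  show ?case by (rule cfd.eR[OF sq[OF eR.hyps(1)] eR.IH(1) eR.IH(2)])
next
  case (signL \<Gamma> T M1 K1 L1)
  let ?G = "(\<Gamma> - {N}) \<union> set Xs"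
  from PL[OF signL.hyps(2) signL.hyps(1)] obtain P' where P': "ac_eq ac (Sign M1 K1) P'" "item_ok ar ac R P'"
    and cl: "\<And>\<Delta> T. ?G \<subseteq> \<Delta> \<Longrightarrow> seq_ok ar ac R \<Delta> T \<Longrightarrow> cfd ar ac R (insert P' \<Delta>) T \<Longrightarrow> cfd ar ac R \<Delta> T"
    by auto
  from PL[OF signL.hyps(3) signL.hyps(1)] obtain Q' where Q': "ac_eq ac (Pub L1) Q'" "item_ok ar ac R Q'"
    and cl2: "\<And>\<Delta> T. ?G \<subseteq> \<Delta> \<Longrightarrow> seq_ok ar ac R \<Delta> T \<Longrightarrow> cfd ar ac R (insert Q' \<Delta>) T \<Longrightarrow> cfd ar ac R \<Delta> T"
    by auto
  from ac_shp[OF P'(1)] obtain a b where ab: "P' = Sign a b" "ac_eq ac M1 a" "ac_eq ac K1 b" by auto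
  from ac_shp[OF Q'(1)] obtain l where l: "Q' = Pub l" "ac_eq ac L1 l" by auto
  have bl: "ac_eq ac b l" by (rule ac_eq.trans[OF ac_eq.trans[OF ac_eq.sym[OF ab(3)] signL.hyps(4)] l(2)])
  have "item_ok ar ac R a" using item_sub[OF P'(2)] ab(1) by (auto simp: subterms_refl)
  let ?H = "insert Q' (insert P' ?G)"
  have s0: "seq_ok ar ac R ?G T" by (rule sq[OF signL.hyps(1)])
  have s1: "seq_ok ar ac R (insert P' ?G) T" using s0 P'(2) by (auto simp: seq_ok_iff)
  have s1': "seq_ok ar ac R ?H T" using s1 Q'(2) by (auto simp: seq_ok_iff)
  have s2: "seq_ok ar ac R (insert a ?H) T"
    using s1' \<open>item_ok ar ac R a\<close> by (auto simp: seq_ok_iff)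
  have c: "\<forall>B\<in>(insert M1 \<Gamma> - {N}) \<union> set Xs. \<exists>B'\<in>insert a ?H. ac_eq ac B B'"
    using ab by (blast intro: ac_eq.refl)
  have "cfd ar ac R (insert a ?H) T" by (rule acinv[OF signL.IH rs s2 ac_eq.refl c])
  then have "cfd ar ac R ?H T" using cfd.signL[of ar ac R ?H T a b l] s1' ab(1) l(1) bl by blast
  then have "cfd ar ac R (insert P' ?G) T" using cl2[OF _ s1] by blast
  then show ?case using cl[OF subset_refl s0] by blast
next
  case (signR \<Gamma> M1 M2)
  show ?case by (rule cfd.signR[OF sq[OF signR.hyps(1)] signR.IH(1) signR.IH(2)])
next
  case (blindL1 \<Gamma> T M1 K1)
  let ?G = "(\<Gamma> - {N}) \<union> set Xs"
  from PL[OF blindL1.hyps(2) blindL1.hyps(1)] obtain P' where P': "ac_eq ac (Blind M1 K1) P'" "item_ok ar ac R P'"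
    and cl: "\<And>\<Delta> T. ?G \<subseteq> \<Delta> \<Longrightarrow> seq_ok ar ac R \<Delta> T \<Longrightarrow> cfd ar ac R (insert P' \<Delta>) T \<Longrightarrow> cfd ar ac R \<Delta> T"
    by auto
  from ac_shp[OF P'(1)] obtain a b where ab: "P' = Blind a b" "ac_eq ac M1 a" "ac_eq ac K1 b" by auto
  have "item_ok ar ac R a" "item_ok ar ac R b" using item_sub[OF P'(2)] ab(1) by (auto simp: subterms_refl)
  have s0: "seq_ok ar ac R ?G T" by (rule sq[OF blindL1.hyps(1)])
  have s1: "seq_ok ar ac R (insert P' ?G) T" using s0 P'(2) by (auto simp: seq_ok_iff)
  have s2: "seq_ok ar ac R (insert P' ?G \<union> {a, b}) T"
    using s1 \<open>item_ok ar ac R a\<close> \<open>item_ok ar ac R b\<close> by (auto simp: seq_ok_iff)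
  have s3: "seq_ok ar ac R (insert P' ?G) b"
    using s1 \<open>item_ok ar ac R b\<close> by (auto simp: seq_ok_iff)
  have c: "\<forall>B\<in>((\<Gamma> \<union> {M1, K1}) - {N}) \<union> set Xs. \<exists>B'\<in>insert P' ?G \<union> {a, b}. ac_eq ac B B'"
    using ab by (blast intro: ac_eq.refl)
  have c2: "\<forall>B\<in>?G. \<exists>B'\<in>insert P' ?G. ac_eq ac B B'" by (blast intro: ac_eq.refl)
  have "cfd ar ac R (insert P' ?G \<union> {a, b}) T" by (rule acinv[OF blindL1.IH(2) rs s2 ac_eq.refl c])
  moreover have "cfd ar ac R (insert P' ?G) b" by (rule acinv[OF blindL1.IH(1) rs s3 ab(3) c2])
  ultimately have "cfd ar ac R (insert P' ?G) T" using cfd.blindL1[of ar ac R "insert P' ?G" T a b] s1 ab(1) by blast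
  then show ?case using cl[OF subset_refl s0] by blast
next
  case (blindR \<Gamma> M1 M2)
  show ?case by (rule cfd.blindR[OF sq[OF blindR.hyps(1)] blindR.IH(1) blindR.IH(2)])
next
  case (blindL2 \<Gamma> T M1 Q1 K1)
  let ?G = "(\<Gamma> - {N}) \<union> set Xs"
  from PL[OF blindL2.hyps(2) blindL2.hyps(1)] obtain P' where P': "ac_eq ac (Sign (Blind M1 Q1) K1) P'" "item_ok ar ac R P'"
    and cl: "\<And>\<Delta> T. ?G \<subseteq> \<Delta> \<Longrightarrow> seq_ok ar ac R \<Delta> T \<Longrightarrow> cfd ar ac R (insert P' \<Delta>) T \<Longrightarrow> cfd ar ac R \<Delta> T"
    by auto
  from ac_shp[OF P'(1)] obtain x k where xk: "P' = Sign x k" "ac_eq ac (Blind M1 Q1) x" "ac_eq ac K1 k" by auto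
  from ac_shp[OF xk(2)] obtain m q where mq: "x = Blind m q" "ac_eq ac M1 m" "ac_eq ac Q1 q" by auto
  have ok: "item_ok ar ac R m" "item_ok ar ac R q" "item_ok ar ac R k"
    using item_sub[OF P'(2)] xk(1) mq(1) by (auto simp: subterms_refl)
  then have okS: "item_ok ar ac R (Sign m k)"
    using normal_sign[OF rs] unfolding item_ok_def ground_def by auto
  have s0: "seq_ok ar ac R ?G T" by (rule sq[OF blindL2.hyps(1)])
  have s1: "seq_ok ar ac R (insert P' ?G) T" using s0 P'(2) by (auto simp: seq_ok_iff)
  have s2: "seq_ok ar ac R (insert P' ?G \<union> {Sign m k, q}) T"
    using s1 ok okS by (auto simp: seq_ok_iff)
  have s3: "seq_ok ar ac R (insert P' ?G) q"
    using s1 ok by (auto simp: seq_ok_iff)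
  have sg: "ac_eq ac (Sign M1 K1) (Sign m k)" by (rule ac_eq.sign[OF mq(2) xk(3)])
  have c: "\<forall>B\<in>((\<Gamma> \<union> {Sign M1 K1, Q1}) - {N}) \<union> set Xs. \<exists>B'\<in>insert P' ?G \<union> {Sign m k, q}. ac_eq ac B B'"
    using sg mq(3) by (blast intro: ac_eq.refl)
  have c2: "\<forall>B\<in>?G. \<exists>B'\<in>insert P' ?G. ac_eq ac B B'" by (blast intro: ac_eq.refl)
  have "cfd ar ac R (insert P' ?G \<union> {Sign m k, q}) T" by (rule acinv[OF blindL2.IH(2) rs s2 ac_eq.refl c])
  moreover have "cfd ar ac R (insert P' ?G) q" by (rule acinv[OF blindL2.IH(1) rs s3 mq(3) c2])
  ultimately have "cfd ar ac R (insert P' ?G) T"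
    using cfd.blindL2[of ar ac R "insert P' ?G" T m q k] s1 xk(1) mq(1) by blast
  then show ?case using cl[OF subset_refl s0] by blast
next
  case (gs \<Gamma> T t A)
  let ?G = "(\<Gamma> - {N}) \<union> set Xs"
  have s0: "seq_ok ar ac R ?G T" by (rule sq[OF gs.hyps(1)])
  show ?case
  proof (cases "t = N")
    case False
    then have tG: "t \<in> insert T ?G" using gs.hyps(2) by blast
    have iA: "item_ok ar ac R A" using item_sub[OF seq_ok_item[OF gs.hyps(1,2)] gs.hyps(3)] .
    have s2: "seq_ok ar ac R (insert A ?G) T" using s0 iA by (auto simp: seq_ok_iff)
    have c: "\<forall>B\<in>(insert A \<Gamma> - {N}) \<union> set Xs. \<exists>B'\<in>insert A ?G. ac_eq ac B B'"
      by (blast intro: ac_eq.refl)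
    have "cfd ar ac R (insert A ?G) T" by (rule acinv[OF gs.IH(2) rs s2 ac_eq.refl c])
    then show ?thesis using cfd.gs[OF s0 tG gs.hyps(3,4) gs.IH(1)] by blast
  next
    case True
    from NJ gs.hyps(3,4) True obtain X B where XB: "X \<in> set Xs" "B \<in> subterms X" "guarded B" "ac_eq ac B A"
      unfolding Jp_def by blast
    have AB: "ac_eq ac A B" by (rule ac_eq.sym[OF XB(4)])
    have iB: "item_ok ar ac R B" using item_sub XB(2) Xok XB(1) by blast
    have XG: "X \<in> insert T ?G" using XB(1) by blast
    have s1: "seq_ok ar ac R ?G B" using s0 iB by (auto simp: seq_ok_iff)
    have s2: "seq_ok ar ac R (insert B ?G) T" using s0 iB by (auto simp: seq_ok_iff)
    have c1: "\<forall>B\<in>?G. \<exists>B'\<in>?G. ac_eq ac B B'" by (blast intro: ac_eq.refl)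
    have c: "\<forall>C\<in>(insert A \<Gamma> - {N}) \<union> set Xs. \<exists>B'\<in>insert B ?G. ac_eq ac C B'"
      using AB by (blast intro: ac_eq.refl)
    have "cfd ar ac R ?G B" by (rule acinv[OF gs.IH(1) rs s1 AB c1])
    moreover have "cfd ar ac R (insert B ?G) T" by (rule acinv[OF gs.IH(2) rs s2 ac_eq.refl c])
    ultimately show ?thesis using cfd.gs[OF s0 XG XB(2,3)] by blast
  qed
qed

end


theorem lemma3:
  fixes ar :: "'f \<Rightarrow> nat" and ac :: "'f set" and th :: "'f \<Rightarrow> nat" and n :: nat
    and Rs :: "nat \<Rightarrow> ('n, 'f) rules" and R :: "('n, 'f) rules"
    and f :: 'f and Xs :: "('n, 'f) trm list" and N M :: "('n, 'f) trm"
    and \<Gamma> :: "('n, 'f) trm set"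
  assumes "E_theory ar ac th n Rs R"
    and "\<forall>X \<in> set Xs. ground X \<and> wft ar X \<and> normal R ac X"
    and "length Xs = ar f"
    and "is_nf R ac (Fn f Xs) N"
    and "cfd ar ac R (insert N \<Gamma>) M"
  shows "cfd ar ac R (\<Gamma> \<union> set Xs) M"
proof -
  have rs: "rewrite_system ar R" using assms(1) unfolding E_theory_def ac_convergent_def by blast
  have Xok: "\<forall>X\<in>set Xs. item_ok ar ac R X" using assms(2) unfolding item_ok_def by blast
  from assms(4) obtain N0 where N0: "(step_mod R ac)\<^sup>*\<^sup>* (Fn f Xs) N0" "ac_eq ac N0 N"
    unfolding is_nf_def by blast
  have NE: "eqE R ac N (Fn f Xs)"
    by (rule eqE_sym[OF eqE_trans[OF steps_eqE[OF N0(1)] eqE_ac[OF N0(2)]]])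
  have Xn: "\<forall>X\<in>set Xs. normal R ac X" using assms(2) by blast
  have NJ: "Jp ac Xs N" by (rule Jp_ac[OF Jp_steps[OF rs Xn N0(1)] N0(2)])
  have m: "cfd ar ac R ((insert N \<Gamma> - {N}) \<union> set Xs) M"
    by (rule main[OF rs Xok assms(3) NE NJ assms(5)])
  have s: "seq_ok ar ac R (\<Gamma> \<union> set Xs) M" using cfd_seq_ok[OF assms(5)] Xok by (auto simp: seq_ok_iff)
  have c: "\<forall>B\<in>(insert N \<Gamma> - {N}) \<union> set Xs. \<exists>B'\<in>\<Gamma> \<union> set Xs. ac_eq ac B B'"
    by (blast intro: ac_eq.refl)
  show ?thesis by (rule acinv[OF m rs s ac_eq.refl c])
qed

end
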